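(* Let $(M,d,+)$ be a metric semigroup, $f:I_a^b\to M$, $x,y\in I_a^b$ with $x<y$, and $x'\in I_x^y$. Define $\lambda,\mu\in\mathbb N_0^n$ by $\lambda_i=1$ if $x_i=x_i'$, $\lambda_i=0$ if $x_i<x_i'$; and $\mu_i=0$ if $x_i'=y_i$, $\mu_i=1$ if $x_i'<y_i$. Then $\lambda\le\mu$, $$I_x^y=\bigcup_{\alpha\in\mathbb N_0^n,\ \lambda\le\alpha\le\mu}I_{x+\alpha(x'-x)}^{x'+\alpha(y-x')},$$ where the rectangles in the union are non-degenerate with pairwise disjoint interiors, and $$\mathrm{md}_n(f,I_x^y)\le\sum_{\lambda\le\alpha\le\mu}\mathrm{md}_n\big(f,I_{x+\alpha(x'-x)}^{x'+\alpha(y-x')}\big).$$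
   Context: Fix $n\in\mathbb N$ and $a,b\in\mathbb R^n$ with $a<b$. Inequalities between points of $\mathbb R^n$ or multiindices are componentwise; $0$ and $1$ denote $(0,\dots,0)$ and $(1,\dots,1)$; for $x\le y$, $I_x^y=\prod_{i=1}^n[x_i,y_i]$; for $\theta\in\mathbb N_0^n$, $\theta x=(\theta_1x_1,\dots,\theta_nx_n)$, $|\theta|=\sum\theta_i$; $\mathcal E(n)$, $\mathcal O(n)$ are the sets of $\theta\in\mathbb N_0^n$, $\theta\le1$, with $|\theta|$ even, resp. odd. A metric semigroup $(M,d,+)$ is a metric space with an Abelian semigroup operation $+$ such that $d(u+w,v+w)=d(u,v)$. For $x\le y$ in $I_a^b$, $\mathrm{md}_n(f,I_x^y)=d\big(\sum_{\theta\in\mathcal E(n)}f(x+\theta(y-x)),\sum_{\eta\in\mathcal O(n)}f(x+\eta(y-x))\big)$. *)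

theory Defs
  imports "HOL-Analysis.Analysis"
begin

class metric_semigroup = metric_space + ab_semigroup_add +
  assumes dist_add_right_cancel: "dist (u + w) (v + w) = dist u v"

definition mi_mult :: "('n::finite \<Rightarrow> nat) \<Rightarrow> real^'n \<Rightarrow> real^'n" where
  "mi_mult \<theta> x = (\<chi> i. real (\<theta> i) * x $ i)"

definition even_mi :: "('n::finite \<Rightarrow> nat) set" where
  "even_mi = {\<theta>. (\<forall>i. \<theta> i \<le> 1) \<and> even (sum \<theta> UNIV)}"

definition odd_mi :: "('n::finite \<Rightarrow> nat) set" where
  "odd_mi = {\<theta>. (\<forall>i. \<theta> i \<le> 1) \<and> odd (sum \<theta> UNIV)}"

text \<open>Sum over a nonempty finite set in an Abelian semigroup (no neutral element).\<close>
definition ssum :: "('a \<Rightarrow> 'b::ab_semigroup_add) \<Rightarrow> 'a set \<Rightarrow> 'b" where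
  "ssum g A = Finite_Set.fold (\<lambda>a acc. g a + acc) (g (SOME a. a \<in> A)) (A - {SOME a. a \<in> A})"

definition md :: "(real^'n::finite \<Rightarrow> 'm::metric_semigroup) \<Rightarrow> real^'n \<Rightarrow> real^'n \<Rightarrow> real" where
  "md f x y = dist (ssum (\<lambda>\<theta>. f (x + mi_mult \<theta> (y - x))) even_mi)
                   (ssum (\<lambda>\<eta>. f (x + mi_mult \<eta> (y - x))) odd_mi)"

end

theory Submission imports Defs "HOL-Library.Multiset" begin

datatype 'a ext = Z | V 'a

instantiation ext :: (ab_semigroup_add) comm_monoid_add
begin
definition zero_ext_def: "0 = Z"
fun plus_ext :: "'a ext \<Rightarrow> 'a ext \<Rightarrow> 'a ext" where
  "plus_ext Z b = b" | "plus_ext (V a) Z = V a" | "plus_ext (V a) (V b) = V (a + b)"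
instance
proof
  fix a b c :: "'a ext"
  show "a + b + c = a + (b + c)" by (cases a; cases b; cases c) (auto simp: add.assoc)
  show "a + b = b + a" by (cases a; cases b) (auto simp: add.commute)
  show "0 + a = a" by (simp add: zero_ext_def)
qed
end

lemma fold_V:
  fixes g :: "'b \<Rightarrow> 'a::ab_semigroup_add"
  assumes "finite B"
  shows "V (Finite_Set.fold (\<lambda>a acc. g a + acc) z B) = V z + (\<Sum>a\<in>B. V (g a))"
  using assms
proof (induction B rule: finite_induct)
  case empty then show ?case by (simp add: zero_ext_def[symmetric])
next
  case (insert a B)
  interpret comp_fun_commute "\<lambda>a acc. g a + acc"
    by unfold_locales (auto simp: fun_eq_iff add.left_commute)
  have "Finite_Set.fold (\<lambda>a acc. g a + acc) z (insert a B) = g a + Finite_Set.fold (\<lambda>a acc. g a + acc) z B"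
    using insert by (simp add: fold_insert)
  then have "V (Finite_Set.fold (\<lambda>a acc. g a + acc) z (insert a B)) = V (g a) + V (Finite_Set.fold (\<lambda>a acc. g a + acc) z B)"
    by simp
  also have "\<dots> = V (g a) + (V z + (\<Sum>a\<in>B. V (g a)))" using insert(3) by simp
  finally show ?case using insert(1,2) by (simp add: add.left_commute)
qed

lemma ssum_V:
  fixes g :: "'b \<Rightarrow> 'a::ab_semigroup_add"
  assumes "finite A" "A \<noteq> {}"
  shows "V (ssum g A) = (\<Sum>a\<in>A. V (g a))"
proof -
  define a0 where "a0 = (SOME a. a \<in> A)"
  have a0: "a0 \<in> A" unfolding a0_def using assms(2) by (simp add: some_in_eq)
  have "V (ssum g A) = V (g a0) + (\<Sum>a\<in>A - {a0}. V (g a))"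
    unfolding ssum_def a0_def[symmetric] using assms(1) by (simp add: fold_V)
  also have "\<dots> = (\<Sum>a\<in>A. V (g a))" using sum.remove[OF assms(1) a0, of "\<lambda>a. V (g a)"] by simp
  finally show ?thesis .
qed

lemma ssum_insert:
  fixes g :: "'b \<Rightarrow> 'a::ab_semigroup_add"
  assumes "finite A" "A \<noteq> {}" "a \<notin> A"
  shows "ssum g (insert a A) = g a + ssum g A"
proof -
  have "V (ssum g (insert a A)) = V (g a + ssum g A)"
    using assms by (simp add: ssum_V del: plus_ext.simps add: plus_ext.simps(3)[symmetric])
  then show ?thesis by simp
qed

lemma ssum_single: "ssum g {a} = g a"
proof -
  have "V (ssum g {a}) = V (g a)" by (simp add: ssum_V)
  then show ?thesis by simp
qed

lemma dist_add2:
  fixes a b c d :: "'m::metric_semigroup"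
  shows "dist (a + b) (c + d) \<le> dist a c + dist b d"
proof -
  have "dist (a + b) (c + d) \<le> dist (a + b) (c + b) + dist (c + b) (c + d)" by (rule dist_triangle)
  also have "dist (a + b) (c + b) = dist a c" by (rule dist_add_right_cancel)
  also have "dist (c + b) (c + d) = dist b d" using dist_add_right_cancel[of b c d] by (simp add: add.commute)
  finally show ?thesis by simp
qed

lemma dist_ssum:
  fixes g h :: "'b \<Rightarrow> 'm::metric_semigroup"
  assumes "finite A" "A \<noteq> {}"
  shows "dist (ssum g A) (ssum h A) \<le> (\<Sum>a\<in>A. dist (g a) (h a))"
  using assms
proof (induction A rule: finite_ne_induct)
  case (singleton x) then show ?case by (simp add: ssum_single)
next
  case (insert x F)
  then show ?case using dist_add2[of "g x" "ssum g F" "h x" "ssum h F"]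
    by (simp add: ssum_insert)
qed


definition vx :: "real^'n::finite \<Rightarrow> real^'n \<Rightarrow> ('n \<Rightarrow> nat) \<Rightarrow> real^'n" where
  "vx lo hi \<theta> = lo + mi_mult \<theta> (hi - lo)"

definition dl :: "real \<Rightarrow> real \<Rightarrow> int" where "dl a b = (if a = b then 1 else 0)"

lemma prod_ind:
  fixes P :: "'n::finite \<Rightarrow> bool"
  shows "(\<Prod>i\<in>UNIV. (if P i then 1 else 0::int)) = (if \<forall>i. P i then 1 else 0)"
  by (auto simp: prod_zero_iff)

lemma B_PiE: "{\<theta>::'n::finite\<Rightarrow>nat. \<forall>i. \<theta> i \<le> 1} = PiE UNIV (\<lambda>_. {0,1})"
  by (auto simp: PiE_iff le_Suc_eq) (metis less_numeral_extra(3))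

lemma G:
  fixes lo hi z :: "real^'n::finite"
  shows "(\<Sum>\<theta>\<in>{\<theta>. \<forall>i. \<theta> i \<le> 1}. (-1)^(sum \<theta> UNIV) * (if vx lo hi \<theta> = z then 1 else 0) :: int)
    = (\<Prod>i\<in>UNIV. dl (lo$i) (z$i) - dl (hi$i) (z$i))"
proof -
  have "(\<Prod>i\<in>UNIV. dl (lo$i) (z$i) - dl (hi$i) (z$i))
     = (\<Prod>i\<in>UNIV. \<Sum>t\<in>{0,1::nat}. (-1)^t * dl (lo$i + real t * (hi$i - lo$i)) (z$i))"
    by simp
  also have "\<dots> = (\<Sum>g\<in>PiE UNIV (\<lambda>_. {0,1}). \<Prod>i\<in>UNIV. (-1)^(g i) * dl (lo$i + real (g i) * (hi$i - lo$i)) (z$i))"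
    by (rule prod_sum_PiE) auto
  also have "\<dots> = (\<Sum>g\<in>PiE UNIV (\<lambda>_. {0,1}). (-1)^(sum g UNIV) * (if vx lo hi g = z then 1 else 0))"
  proof (rule sum.cong[OF refl])
    fix g :: "'n \<Rightarrow> nat"
    have "(\<Prod>i\<in>UNIV. (-1)^(g i) * dl (lo$i + real (g i) * (hi$i - lo$i)) (z$i))
      = (\<Prod>i\<in>UNIV. (-1::int)^(g i)) * (\<Prod>i\<in>UNIV. (if (vx lo hi g)$i = z$i then 1 else 0::int))"
      by (simp add: prod.distrib dl_def vx_def mi_mult_def)
    also have "\<dots> = (-1)^(sum g UNIV) * (if vx lo hi g = z then 1 else 0)"
      by (simp add: power_sum prod_ind vec_eq_iff)
    finally show "(\<Prod>i\<in>UNIV. (-1)^(g i) * dl (lo$i + real (g i) * (hi$i - lo$i)) (z$i))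
      = (-1)^(sum g UNIV) * (if vx lo hi g = z then 1 else 0)" .
  qed
  finally show ?thesis by (simp only: B_PiE)
qed


lemma fin_B: "finite {\<theta>::'n::finite\<Rightarrow>nat. \<forall>i. \<theta> i \<le> 1}"
  unfolding B_PiE by (rule finite_PiE) auto

lemma fin_ev: "finite (even_mi :: ('n::finite \<Rightarrow> nat) set)"
  by (rule finite_subset[OF _ fin_B]) (auto simp: even_mi_def)
lemma fin_od: "finite (odd_mi :: ('n::finite \<Rightarrow> nat) set)"
  by (rule finite_subset[OF _ fin_B]) (auto simp: odd_mi_def)
lemma ne_ev: "(even_mi :: ('n::finite \<Rightarrow> nat) set) \<noteq> {}"
proof -
  have "(\<lambda>_. 0) \<in> (even_mi :: ('n::finite \<Rightarrow> nat) set)" by (simp add: even_mi_def)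
  then show ?thesis by blast
qed
lemma ne_od: "(odd_mi :: ('n::finite \<Rightarrow> nat) set) \<noteq> {}"
proof -
  have "(\<lambda>j. if j = undefined then 1 else 0) \<in> (odd_mi :: ('n::finite \<Rightarrow> nat) set)"
    by (simp add: odd_mi_def)
  then show ?thesis by blast
qed

definition cnt :: "('n::finite \<Rightarrow> nat) set \<Rightarrow> real^'n \<Rightarrow> real^'n \<Rightarrow> real^'n \<Rightarrow> nat" where
  "cnt S lo hi z = (\<Sum>\<theta>\<in>S. if vx lo hi \<theta> = z then 1 else 0)"

lemma D:
  fixes lo hi z :: "real^'n::finite"
  shows
  "int (cnt even_mi lo hi z) - int (cnt odd_mi lo hi z) = (\<Prod>i\<in>UNIV. dl (lo$i) (z$i) - dl (hi$i) (z$i))"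
proof -
  have U: "{\<theta>::'n\<Rightarrow>nat. \<forall>i. \<theta> i \<le> 1} = even_mi \<union> (odd_mi::('n\<Rightarrow>nat) set)" by (auto simp: even_mi_def odd_mi_def)
  have I: "even_mi \<inter> (odd_mi::('n\<Rightarrow>nat) set) = {}" by (auto simp: even_mi_def odd_mi_def)
  have "(\<Prod>i\<in>UNIV. dl (lo$i) (z$i) - dl (hi$i) (z$i)) =
     (\<Sum>\<theta>\<in>even_mi. (-1)^(sum \<theta> UNIV) * (if vx lo hi \<theta> = z then 1 else 0) :: int)
   + (\<Sum>\<theta>\<in>odd_mi. (-1)^(sum \<theta> UNIV) * (if vx lo hi \<theta> = z then 1 else 0) :: int)"
    unfolding G[symmetric] U by (rule sum.union_disjoint[OF fin_ev fin_od I])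
  also have "(\<Sum>\<theta>\<in>even_mi. (-1)^(sum \<theta> UNIV) * (if vx lo hi \<theta> = z then 1 else 0) :: int)
     = int (cnt even_mi lo hi z)"
    unfolding cnt_def of_nat_sum by (rule sum.cong) (auto simp: even_mi_def)
  also have "(\<Sum>\<theta>\<in>odd_mi. (-1)^(sum \<theta> UNIV) * (if vx lo hi \<theta> = z then 1 else 0) :: int)
     = - int (cnt odd_mi lo hi z)"
    unfolding cnt_def of_nat_sum sum_negf[symmetric] by (rule sum.cong) (auto simp: odd_mi_def)
  finally show ?thesis by simp
qed


lemma A_PiE: "{\<alpha>::'n\<Rightarrow>nat. lam \<le> \<alpha> \<and> \<alpha> \<le> mu} = PiE UNIV (\<lambda>i. {lam i..mu i})"
  by (auto simp: PiE_iff le_fun_def)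

lemma tele:
  fixes x y x' z :: "real^'n::finite"
  assumes xy: "\<forall>i. x $ i < y $ i"
    and x': "\<forall>i. x$i \<le> x'$i \<and> x'$i \<le> y$i"
    and lam_def: "lam = (\<lambda>i. if x $ i = x' $ i then 1 else 0)"
    and mu_def: "mu = (\<lambda>i. if x' $ i = y $ i then 0 else 1)"
  shows "(\<Sum>\<alpha>\<in>{\<alpha>. lam \<le> \<alpha> \<and> \<alpha> \<le> mu}.
     \<Prod>i\<in>UNIV. dl ((x + mi_mult \<alpha> (x' - x))$i) (z$i) - dl ((x' + mi_mult \<alpha> (y - x'))$i) (z$i))
   = (\<Prod>i\<in>UNIV. dl (x$i) (z$i) - dl (y$i) (z$i))"
proof -
  have "(\<Sum>\<alpha>\<in>{\<alpha>. lam \<le> \<alpha> \<and> \<alpha> \<le> mu}.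
     \<Prod>i\<in>UNIV. dl ((x + mi_mult \<alpha> (x' - x))$i) (z$i) - dl ((x' + mi_mult \<alpha> (y - x'))$i) (z$i))
   = (\<Sum>\<alpha>\<in>PiE UNIV (\<lambda>i. {lam i..mu i}).
     \<Prod>i\<in>UNIV. dl (x$i + real (\<alpha> i) * (x'$i - x$i)) (z$i) - dl (x'$i + real (\<alpha> i) * (y$i - x'$i)) (z$i))"
    unfolding A_PiE by (simp add: mi_mult_def)
  also have "\<dots> = (\<Prod>i\<in>UNIV. \<Sum>a\<in>{lam i..mu i}.
        dl (x$i + real a * (x'$i - x$i)) (z$i) - dl (x'$i + real a * (y$i - x'$i)) (z$i))"
    by (rule prod_sum_PiE[symmetric]) auto
  also have "\<dots> = (\<Prod>i\<in>UNIV. dl (x$i) (z$i) - dl (y$i) (z$i))"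
  proof (rule prod.cong[OF refl])
    fix i
    show "(\<Sum>a\<in>{lam i..mu i}.
        dl (x$i + real a * (x'$i - x$i)) (z$i) - dl (x'$i + real a * (y$i - x'$i)) (z$i))
       = dl (x$i) (z$i) - dl (y$i) (z$i)"
    proof (cases "x$i = x'$i")
      case True
      then have "x'$i \<noteq> y$i" using xy by (metis less_irrefl)
      then show ?thesis using True by (simp add: lam_def mu_def)
    next
      case F: False
      show ?thesis
      proof (cases "x'$i = y$i")
        case True then show ?thesis using F by (simp add: lam_def mu_def)
      next
        case False
        have "{0..1::nat} = {0,1}" by auto
        then show ?thesis using F False by (simp add: lam_def mu_def)
      qed
    qed
  qed
  finally show ?thesis .
qed


definition Ms :: "('n::finite \<Rightarrow> nat) set \<Rightarrow> real^'n \<Rightarrow> real^'n \<Rightarrow> (real^'n) multiset" where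
  "Ms S lo hi = (\<Sum>\<theta>\<in>S. {#vx lo hi \<theta>#})"

lemma count_Ms: "count (Ms S lo hi) z = cnt S lo hi z"
  unfolding Ms_def cnt_def count_sum by (rule sum.cong) auto

lemma phi_Ms:
  fixes f :: "real^'n::finite \<Rightarrow> 'm::ab_semigroup_add"
  assumes "finite S" "S \<noteq> {}"
  shows "sum_mset (image_mset (\<lambda>p. V (f p)) (Ms S lo hi)) = V (ssum (\<lambda>\<theta>. f (lo + mi_mult \<theta> (hi - lo))) S)"
proof -
  have "sum_mset (image_mset (\<lambda>p. V (f p)) (Ms S lo hi)) = (\<Sum>\<theta>\<in>S. sum_mset (image_mset (\<lambda>p. V (f p)) {#vx lo hi \<theta>#}))"
    unfolding Ms_def by (rule sum_comp_morphism[symmetric, unfolded o_def]) auto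
  also have "\<dots> = V (ssum (\<lambda>\<theta>. f (lo + mi_mult \<theta> (hi - lo))) S)"
    using assms by (simp add: ssum_V vx_def)
  finally show ?thesis .
qed

theorem lemma11:
  fixes f :: "real^'n \<Rightarrow> 'm::metric_semigroup"
    and a b x y x' :: "real^'n"
    and lam mu :: "'n \<Rightarrow> nat"
  assumes ab: "\<forall>i. a $ i < b $ i"
    and x: "x \<in> cbox a b" and y: "y \<in> cbox a b"
    and xy: "\<forall>i. x $ i < y $ i"
    and x': "x' \<in> cbox x y"
    and lam_def: "lam = (\<lambda>i. if x $ i = x' $ i then 1 else 0)"
    and mu_def: "mu = (\<lambda>i. if x' $ i = y $ i then 0 else 1)"
  shows "lam \<le> mu
    \<and> cbox x y = (\<Union>\<alpha>\<in>{\<alpha>. lam \<le> \<alpha> \<and> \<alpha> \<le> mu}.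
          cbox (x + mi_mult \<alpha> (x' - x)) (x' + mi_mult \<alpha> (y - x')))
    \<and> (\<forall>\<alpha>\<in>{\<alpha>. lam \<le> \<alpha> \<and> \<alpha> \<le> mu}. \<forall>i.
          (x + mi_mult \<alpha> (x' - x)) $ i < (x' + mi_mult \<alpha> (y - x')) $ i)
    \<and> (\<forall>\<alpha>\<in>{\<alpha>. lam \<le> \<alpha> \<and> \<alpha> \<le> mu}. \<forall>\<beta>\<in>{\<alpha>. lam \<le> \<alpha> \<and> \<alpha> \<le> mu}. \<alpha> \<noteq> \<beta> \<longrightarrow>
          interior (cbox (x + mi_mult \<alpha> (x' - x)) (x' + mi_mult \<alpha> (y - x')))
          \<inter> interior (cbox (x + mi_mult \<beta> (x' - x)) (x' + mi_mult \<beta> (y - x'))) = {})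
    \<and> md f x y \<le> (\<Sum>\<alpha>\<in>{\<alpha>. lam \<le> \<alpha> \<and> \<alpha> \<le> mu}.
          md f (x + mi_mult \<alpha> (x' - x)) (x' + mi_mult \<alpha> (y - x')))"
proof -
  define A where "A = {\<alpha>. lam \<le> \<alpha> \<and> \<alpha> \<le> mu}"
  define lo where "lo \<alpha> = x + mi_mult \<alpha> (x' - x)" for \<alpha>
  define hi where "hi \<alpha> = x' + mi_mult \<alpha> (y - x')" for \<alpha>
  have x'i: "\<forall>i. x$i \<le> x'$i \<and> x'$i \<le> y$i" using x' by (simp add: mem_box_cart)
  have loi: "lo \<alpha> $ i = x$i + real (\<alpha> i) * (x'$i - x$i)" for \<alpha> i by (simp add: lo_def mi_mult_def)
  have hii: "hi \<alpha> $ i = x'$i + real (\<alpha> i) * (y$i - x'$i)" for \<alpha> i by (simp add: hi_def mi_mult_def)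
  have Ai: "\<alpha> \<in> A \<longleftrightarrow> (\<forall>i. lam i \<le> \<alpha> i \<and> \<alpha> i \<le> mu i)" for \<alpha> by (auto simp: A_def le_fun_def)
  have lm: "lam \<le> mu"
    unfolding le_fun_def lam_def mu_def using xy by (auto simp: less_le)
  have finA: "finite A" unfolding A_def A_PiE by (rule finite_PiE) auto
  have neA: "A \<noteq> {}" using lm by (auto simp: A_def)
  have A01: "\<alpha> \<in> A \<Longrightarrow> \<alpha> i = 0 \<or> \<alpha> i = 1" for \<alpha> i
  proof -
    assume "\<alpha> \<in> A"
    then have "\<alpha> i \<le> mu i" using Ai by blast
    moreover have "mu i \<le> 1" by (simp add: mu_def)
    ultimately show ?thesis by linarith
  qed
  have nd: "\<forall>\<alpha>\<in>A. \<forall>i. lo \<alpha> $ i < hi \<alpha> $ i"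
  proof (intro ballI allI)
    fix \<alpha> i assume a: "\<alpha> \<in> A"
    show "lo \<alpha> $ i < hi \<alpha> $ i"
    proof (cases "\<alpha> i = 0")
      case True
      then have "lam i = 0" using a Ai by (metis le_zero_eq)
      then have "x$i \<noteq> x'$i" by (auto simp: lam_def split: if_splits)
      then show ?thesis using True x'i by (simp add: loi hii less_le)
    next
      case False
      then have "\<alpha> i = 1" using A01[OF a, of i] by auto
      then have "mu i \<ge> 1" using a Ai by metis
      then have "x'$i \<noteq> y$i" by (auto simp: mu_def split: if_splits)
      then show ?thesis using \<open>\<alpha> i = 1\<close> x'i by (simp add: loi hii less_le)
    qed
  qed
  have un: "cbox x y = (\<Union>\<alpha>\<in>A. cbox (lo \<alpha>) (hi \<alpha>))"
  proof
    show "cbox x y \<subseteq> (\<Union>\<alpha>\<in>A. cbox (lo \<alpha>) (hi \<alpha>))"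
    proof
      fix z assume z: "z \<in> cbox x y"
      then have zi: "\<forall>i. x$i \<le> z$i \<and> z$i \<le> y$i" by (simp add: mem_box_cart)
      define \<alpha> where "\<alpha> i = (if z$i \<le> x'$i \<and> x$i \<noteq> x'$i then 0 else 1::nat)" for i
      have "\<alpha> \<in> A" unfolding Ai using xy zi by (auto simp: \<alpha>_def lam_def mu_def; metis less_irrefl)
      moreover have "z \<in> cbox (lo \<alpha>) (hi \<alpha>)"
        unfolding mem_box_cart loi hii using zi x'i by (auto simp: \<alpha>_def; metis)
      ultimately show "z \<in> (\<Union>\<alpha>\<in>A. cbox (lo \<alpha>) (hi \<alpha>))" by blast
    qed
    show "(\<Union>\<alpha>\<in>A. cbox (lo \<alpha>) (hi \<alpha>)) \<subseteq> cbox x y"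
    proof clarify
      fix \<alpha> z assume a: "\<alpha> \<in> A" and z: "z \<in> cbox (lo \<alpha>) (hi \<alpha>)"
      show "z \<in> cbox x y" unfolding mem_box_cart
      proof
        fix i
        have "lo \<alpha> $ i \<le> z $ i" "z $ i \<le> hi \<alpha> $ i" using z by (auto simp: mem_box_cart)
        then show "x$i \<le> z$i \<and> z$i \<le> y$i" using A01[OF a, of i] x'i[rule_format, of i] by (auto simp: loi hii)
      qed
    qed
  qed
  have dj: "\<forall>\<alpha>\<in>A. \<forall>\<beta>\<in>A. \<alpha> \<noteq> \<beta> \<longrightarrow> interior (cbox (lo \<alpha>) (hi \<alpha>)) \<inter> interior (cbox (lo \<beta>) (hi \<beta>)) = {}"
  proof (intro ballI impI)
    fix \<alpha> \<beta> assume a: "\<alpha> \<in> A" and b: "\<beta> \<in> A" and ne: "\<alpha> \<noteq> \<beta>"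
    then obtain i where i: "\<alpha> i \<noteq> \<beta> i" by (auto simp: fun_eq_iff)
    show "interior (cbox (lo \<alpha>) (hi \<alpha>)) \<inter> interior (cbox (lo \<beta>) (hi \<beta>)) = {}"
    proof (rule ccontr)
      assume "\<not> ?thesis"
      then obtain z where "z \<in> box (lo \<alpha>) (hi \<alpha>)" "z \<in> box (lo \<beta>) (hi \<beta>)" by auto
      then have "lo \<alpha> $ i < z$i" "z$i < hi \<alpha> $ i" "lo \<beta> $ i < z$i" "z$i < hi \<beta> $ i"
        by (auto simp: mem_box_cart)
      then show False using A01[OF a, of i] A01[OF b, of i] i by (auto simp: loi hii)
    qed
  qed
  define E where "E = ssum (\<lambda>\<theta>. f (x + mi_mult \<theta> (y - x))) even_mi"
  define Od where "Od = ssum (\<lambda>\<theta>. f (x + mi_mult \<theta> (y - x))) odd_mi"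
  define Ea where "Ea \<alpha> = ssum (\<lambda>\<theta>. f (lo \<alpha> + mi_mult \<theta> (hi \<alpha> - lo \<alpha>))) even_mi" for \<alpha>
  define Oa where "Oa \<alpha> = ssum (\<lambda>\<theta>. f (lo \<alpha> + mi_mult \<theta> (hi \<alpha> - lo \<alpha>))) odd_mi" for \<alpha>
  define SE where "SE = ssum Ea A"
  define SO where "SO = ssum Oa A"
  define \<phi> where "\<phi> M = sum_mset (image_mset (\<lambda>p. V (f p)) M)" for M
  have phi_add: "\<phi> (M + N) = \<phi> M + \<phi> N" for M N by (simp add: \<phi>_def)
  have phi_sum: "\<phi> (\<Sum>\<alpha>\<in>A. g \<alpha>) = (\<Sum>\<alpha>\<in>A. \<phi> (g \<alpha>))" for g
    using sum_comp_morphism[of \<phi> g A] phi_add by (simp add: \<phi>_def o_def)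
  have cnteq: "cnt even_mi x y z + (\<Sum>\<alpha>\<in>A. cnt odd_mi (lo \<alpha>) (hi \<alpha>) z)
      = cnt odd_mi x y z + (\<Sum>\<alpha>\<in>A. cnt even_mi (lo \<alpha>) (hi \<alpha>) z)" for z
  proof -
    have "int (cnt even_mi x y z) - int (cnt odd_mi x y z)
        = (\<Sum>\<alpha>\<in>A. int (cnt even_mi (lo \<alpha>) (hi \<alpha>) z) - int (cnt odd_mi (lo \<alpha>) (hi \<alpha>) z))"
      unfolding D using tele[OF xy x'i lam_def mu_def, of z] by (simp add: A_def lo_def hi_def)
    then have "int (cnt even_mi x y z) - int (cnt odd_mi x y z)
        = int (\<Sum>\<alpha>\<in>A. cnt even_mi (lo \<alpha>) (hi \<alpha>) z) - int (\<Sum>\<alpha>\<in>A. cnt odd_mi (lo \<alpha>) (hi \<alpha>) z)"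
      by (simp only: sum_subtractf of_nat_sum)
    then show ?thesis by linarith
  qed
  have meq: "Ms even_mi x y + (\<Sum>\<alpha>\<in>A. Ms odd_mi (lo \<alpha>) (hi \<alpha>))
      = Ms odd_mi x y + (\<Sum>\<alpha>\<in>A. Ms even_mi (lo \<alpha>) (hi \<alpha>))"
    by (rule multiset_eqI) (simp add: count_sum count_Ms cnteq)
  have VE: "V E = \<phi> (Ms even_mi x y)" using phi_Ms[OF fin_ev ne_ev, of f x y] by (simp add: \<phi>_def E_def)
  have VOd: "V Od = \<phi> (Ms odd_mi x y)" using phi_Ms[OF fin_od ne_od, of f x y] by (simp add: \<phi>_def Od_def)
  have VSO: "V SO = \<phi> (\<Sum>\<alpha>\<in>A. Ms odd_mi (lo \<alpha>) (hi \<alpha>))"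
    unfolding phi_sum SO_def using ssum_V[OF finA neA, of Oa] phi_Ms[OF fin_od ne_od, of f] by (simp add: \<phi>_def Oa_def)
  have VSE: "V SE = \<phi> (\<Sum>\<alpha>\<in>A. Ms even_mi (lo \<alpha>) (hi \<alpha>))"
    unfolding phi_sum SE_def using ssum_V[OF finA neA, of Ea] phi_Ms[OF fin_ev ne_ev, of f] by (simp add: \<phi>_def Ea_def)
  have "V (E + SO) = V (Od + SE)"
  proof -
    have "V (E + SO) = V E + V SO" by simp
    also have "\<dots> = \<phi> (Ms even_mi x y + (\<Sum>\<alpha>\<in>A. Ms odd_mi (lo \<alpha>) (hi \<alpha>)))"
      by (simp only: VE VSO phi_add)
    also have "\<dots> = \<phi> (Ms odd_mi x y + (\<Sum>\<alpha>\<in>A. Ms even_mi (lo \<alpha>) (hi \<alpha>)))" by (simp only: meq)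
    also have "\<dots> = V Od + V SE" by (simp only: VOd VSE phi_add)
    also have "\<dots> = V (Od + SE)" by simp
    finally show ?thesis .
  qed
  then have key: "E + SO = Od + SE" by simp
  have "md f x y = dist E Od" by (simp add: md_def E_def Od_def)
  also have "\<dots> = dist (E + SO) (Od + SO)" by (simp add: dist_add_right_cancel)
  also have "\<dots> = dist (SE + Od) (SO + Od)" using key by (metis add.commute)
  also have "\<dots> = dist SE SO" by (simp add: dist_add_right_cancel)
  also have "\<dots> \<le> (\<Sum>\<alpha>\<in>A. dist (Ea \<alpha>) (Oa \<alpha>))" unfolding SE_def SO_def by (rule dist_ssum[OF finA neA])
  also have "\<dots> = (\<Sum>\<alpha>\<in>A. md f (lo \<alpha>) (hi \<alpha>))" by (simp add: md_def Ea_def Oa_def)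
  finally have mdi: "md f x y \<le> (\<Sum>\<alpha>\<in>A. md f (lo \<alpha>) (hi \<alpha>))" .
  show ?thesis using lm un nd dj mdi unfolding A_def lo_def hi_def by (simp only:)
qed

end
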